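(* Let $p\ge2$ and let $m_1,m_2$ be positive integers with $m_1\not\equiv m_2\pmod p$. Then for no width $d\ge1$ and no $W\in\mathbb{R}^{d\times p}$, $V\in\mathbb{R}^{p\times d}$ does the ReLU network $s^\theta(x)=V\,\mathrm{ReLU}(Wx)$ satisfy $h_\theta(x)=y(x)$ for all $x\in\mathcal{X}_{m_1}\cup\mathcal{X}_{m_2}$.
   Context: Let $[p]=\{0,1,\dots,p-1\}$ and, for an integer $m\ge1$, $\mathcal{X}_m=\{x\in\{0,1,\dots,m\}^p:\ \|x\|_1=m\}$, with coordinates of $x$ indexed by $[p]$. The label of $x$ is $y(x)=(\sum_{r\in[p]} r\,x_r)\bmod p\in[p]$. $\mathrm{ReLU}(t)=\max\{0,t\}$ is applied entrywise. For a score vector $s^\theta(x)\in\mathbb{R}^p$ with coordinates indexed by $[p]$, the predictor is $h_\theta(x)=\ell$ if $s^\theta_\ell(x)>s^\theta_k(x)$ for all $k\ne\ell$, and $h_\theta(x)=\bot$ (invalid, never equal to a label) otherwise. *)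

theory Defs
  imports Complex_Main
begin

text \<open>Inputs: x is represented as a function nat => nat, with coordinates indexed by [p] = {0..<p}
  and x r = 0 for r >= p (canonical representative).\<close>

definition X_set :: "nat \<Rightarrow> nat \<Rightarrow> (nat \<Rightarrow> nat) set" where
  "X_set p m = {x. (\<forall>r. r \<ge> p \<longrightarrow> x r = 0) \<and> (\<forall>r<p. x r \<le> m) \<and> (\<Sum>r<p. x r) = m}"

definition label :: "nat \<Rightarrow> (nat \<Rightarrow> nat) \<Rightarrow> nat" where
  "label p x = (\<Sum>r<p. r * x r) mod p"

definition relu :: "real \<Rightarrow> real" where
  "relu t = max 0 t"

definition score :: "nat \<Rightarrow> nat \<Rightarrow> (nat \<Rightarrow> nat \<Rightarrow> real) \<Rightarrow> (nat \<Rightarrow> nat \<Rightarrow> real)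
    \<Rightarrow> (nat \<Rightarrow> nat) \<Rightarrow> nat \<Rightarrow> real" where
  "score p d W V x k = (\<Sum>j<d. V k j * relu (\<Sum>r<p. W j r * real (x r)))"

text \<open>Predictor: Some l if coordinate l strictly exceeds all others; None plays the role of \<bottom>.\<close>
definition predictor :: "nat \<Rightarrow> (nat \<Rightarrow> real) \<Rightarrow> nat option" where
  "predictor p s = (if \<exists>l<p. \<forall>k<p. k \<noteq> l \<longrightarrow> s l > s k
      then Some (THE l. l < p \<and> (\<forall>k<p. k \<noteq> l \<longrightarrow> s l > s k)) else None)"

end

theory Submission
  imports Defs
begin

lemma relu_scale: "c \<ge> 0 \<Longrightarrow> relu (c * t) = c * relu t"
  unfolding relu_def by (simp add: max_mult_distrib_left)

lemma score_scale:
  "score p d W V (\<lambda>r. if r = 1 then m else 0) k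
   = real m * score p d W V (\<lambda>r. if r = 1 then 1 else 0) k"
proof -
  have "\<And>j. (\<Sum>r<p. W j r * real (if r = 1 then m else 0))
        = real m * (\<Sum>r<p. W j r * real (if r = 1 then (1::nat) else 0))"
    by (simp add: sum_distrib_left mult_ac if_distrib cong: if_cong)
  note h = this
  show ?thesis
    unfolding score_def h relu_scale[OF of_nat_0_le_iff]
    by (simp add: sum_distrib_left mult_ac)
qed

lemma predictor_scale:
  assumes "(c::real) > 0"
  shows "predictor p (\<lambda>k. c * s k) = predictor p s"
  using assms unfolding predictor_def by (auto simp add: mult_less_cancel_left_pos)

lemma inX:
  assumes "p \<ge> 2"
  shows "(\<lambda>r. if r = 1 then m else 0) \<in> X_set p m"
proof -
  have "(\<Sum>r<p. (if r = 1 then m else 0)) = m" using assms by (simp add: sum.delta)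
  then show ?thesis using assms unfolding X_set_def by auto
qed

lemma label_x:
  assumes "p \<ge> 2"
  shows "label p (\<lambda>r. if r = 1 then m else 0) = m mod p"
proof -
  have "(\<Sum>r<p. r * (if r = 1 then m else 0)) = m" using assms
    by (simp add: if_distrib sum.delta cong: if_cong)
  then show ?thesis unfolding label_def by simp
qed

theorem mainTheorem4:
  fixes p m1 m2 :: nat
  assumes "p \<ge> 2" and "m1 \<ge> 1" and "m2 \<ge> 1" and "m1 mod p \<noteq> m2 mod p"
  shows "\<not> (\<exists>(d::nat) (W::nat \<Rightarrow> nat \<Rightarrow> real) (V::nat \<Rightarrow> nat \<Rightarrow> real). d \<ge> 1 \<and>
           (\<forall>x \<in> X_set p m1 \<union> X_set p m2.
              predictor p (score p d W V x) = Some (label p x)))"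
proof
  assume "\<exists>(d::nat) (W::nat \<Rightarrow> nat \<Rightarrow> real) (V::nat \<Rightarrow> nat \<Rightarrow> real). d \<ge> 1 \<and>
           (\<forall>x \<in> X_set p m1 \<union> X_set p m2.
              predictor p (score p d W V x) = Some (label p x))"
  then obtain d W V where H: "\<forall>x \<in> X_set p m1 \<union> X_set p m2.
              predictor p (score p d W V x) = Some (label p x)" by blast
  let ?s = "score p d W V (\<lambda>r. if r = 1 then 1 else 0)"
  have key: "predictor p ?s = Some (m mod p)" if "m \<ge> 1"
     "(\<lambda>r. if r = 1 then m else 0) \<in> X_set p m1 \<union> X_set p m2" for m
  proof -
    have "predictor p (score p d W V (\<lambda>r. if r = 1 then m else 0)) = Some (m mod p)"
      using H that label_x[OF assms(1)] by metis
    moreover have "score p d W V (\<lambda>r. if r = 1 then m else 0) = (\<lambda>k. real m * ?s k)"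
      using score_scale by blast
    moreover have "real m > 0" using that by simp
    ultimately show ?thesis using predictor_scale by metis
  qed
  have "predictor p ?s = Some (m1 mod p)" using key[of m1] inX[OF assms(1)] assms by blast
  moreover have "predictor p ?s = Some (m2 mod p)" using key[of m2] inX[OF assms(1)] assms by blast
  ultimately show False using assms(4) by simp
qed

end
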